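(* Let $C$ be a clause and $\Gamma$ a set of clauses with designated blocking variables. Suppose there is a permutation $\pi$ of the variables (viewed as a substitution) such that (1) $\pi$ maps the set of blocking variables to itself, (2) the substitution $\lnot C\circ\pi$ satisfies $C$, and (3) $\Gamma{\upharpoonright}_{\lnot C}\supseteq\Gamma{\upharpoonright}_{\lnot C\circ\pi}$. Then $C$ is cost-SR w.r.t. $\Gamma$.
   Context: Substitutions map variables to $0$, $1$ or literals ($\sigma(\lnot x)=\lnot\sigma(x)$, $\sigma(0)=0$, $\sigma(1)=1$); $(\sigma\circ\tau)(x)=\sigma(\tau(x))$; total assignments assign all variables. $C{\upharpoonright}_\sigma$: apply $\sigma$ to the literals and simplify; $\sigma$ satisfies $C$ if the result is $1$ or tautological; $\Gamma{\upharpoonright}_\sigma$ is the multiset of $C{\upharpoonright}_\sigma\ne1$, $C\in\Gamma$. $\lnot C$ is the partial assignment falsifying all literals of $C$. $\Gamma\vdash_1 D$ means unit propagation on $\Gamma{\upharpoonright}_{\lnot D}$ derives the empty clause; $\Gamma\vdash_1\Delta$ means this for all $D\in\Delta$. $\mathrm{cost}(\alpha)=\sum_i\alpha(b_i)$ over blocking variables. $C$ is cost-SR w.r.t. $\Gamma$ if there is a substitution $\sigma$ with (1) $\Gamma{\upharpoonright}_{\lnot C}\vdash_1(\Gamma\cup\{C\}){\upharpoonright}_\sigma$ and (2) $\mathrm{cost}(\tau\circ\sigma)\le\mathrm{cost}(\tau)$ for all total $\tau\supseteq\lnot C$. *)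

theory Defs
  imports Main "HOL-Library.Multiset"
begin

datatype 'v lit = Pos 'v | Neg 'v

fun var_of :: "'v lit \<Rightarrow> 'v" where
  "var_of (Pos x) = x" | "var_of (Neg x) = x"

fun neg_lit :: "'v lit \<Rightarrow> 'v lit" where
  "neg_lit (Pos x) = Neg x" | "neg_lit (Neg x) = Pos x"

type_synonym 'v clause = "'v lit set"

datatype 'v sval = Const bool | Lit "'v lit"

type_synonym 'v subst = "'v \<Rightarrow> 'v sval"

fun neg_sval :: "'v sval \<Rightarrow> 'v sval" where
  "neg_sval (Const b) = Const (\<not> b)" | "neg_sval (Lit l) = Lit (neg_lit l)"

fun subst_lit :: "'v subst \<Rightarrow> 'v lit \<Rightarrow> 'v sval" where
  "subst_lit \<sigma> (Pos x) = \<sigma> x" | "subst_lit \<sigma> (Neg x) = neg_sval (\<sigma> x)"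

fun subst_sval :: "'v subst \<Rightarrow> 'v sval \<Rightarrow> 'v sval" where
  "subst_sval \<sigma> (Const b) = Const b" | "subst_sval \<sigma> (Lit l) = subst_lit \<sigma> l"

definition subst_comp :: "'v subst \<Rightarrow> 'v subst \<Rightarrow> 'v subst" where
  "subst_comp \<sigma> \<tau> = (\<lambda>x. subst_sval \<sigma> (\<tau> x))"

definition is_total :: "'v subst \<Rightarrow> bool" where
  "is_total \<tau> \<longleftrightarrow> (\<forall>x. \<exists>b. \<tau> x = Const b)"

definition extends :: "'v subst \<Rightarrow> 'v subst \<Rightarrow> bool" where
  "extends \<tau> \<alpha> \<longleftrightarrow> (\<forall>x b. \<alpha> x = Const b \<longrightarrow> \<tau> x = Const b)"

definition neg_clause :: "'v clause \<Rightarrow> 'v subst" where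
  "neg_clause C = (\<lambda>x. if Pos x \<in> C then Const False
                        else if Neg x \<in> C then Const True
                        else Lit (Pos x))"

text \<open>Restriction of a clause: None represents the clause simplifying to 1
  (some literal mapped to 1, or the result is tautological); otherwise the
  simplified clause (literals mapped to 0 are dropped).\<close>
definition restrict_clause :: "'v subst \<Rightarrow> 'v clause \<Rightarrow> 'v clause option" where
  "restrict_clause \<sigma> C =
     (let R = subst_lit \<sigma> ` C; L = {l. Lit l \<in> R} in
      if Const True \<in> R \<or> (\<exists>l\<in>L. neg_lit l \<in> L) then None else Some L)"

definition satisfies :: "'v subst \<Rightarrow> 'v clause \<Rightarrow> bool" where
  "satisfies \<sigma> C \<longleftrightarrow> restrict_clause \<sigma> C = None"

definition restrict_ms :: "'v subst \<Rightarrow> 'v clause multiset \<Rightarrow> 'v clause multiset" where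
  "restrict_ms \<sigma> F = image_mset (\<lambda>C. the (restrict_clause \<sigma> C)) (filter_mset (\<lambda>C. restrict_clause \<sigma> C \<noteq> None) F)"

definition unit_assign :: "'v lit \<Rightarrow> 'v subst" where
  "unit_assign l = (\<lambda>x. if x = var_of l then Const (case l of Pos _ \<Rightarrow> True | Neg _ \<Rightarrow> False)
                        else Lit (Pos x))"

inductive up_refutes :: "'v clause multiset \<Rightarrow> bool" where
  empty: "{} \<in># F \<Longrightarrow> up_refutes F"
| unit: "{l} \<in># F \<Longrightarrow> up_refutes (restrict_ms (unit_assign l) F) \<Longrightarrow> up_refutes F"

definition up_implies :: "'v clause multiset \<Rightarrow> 'v clause \<Rightarrow> bool" where
  "up_implies F D \<longleftrightarrow> up_refutes (restrict_ms (neg_clause D) F)"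

definition up_implies_all :: "'v clause multiset \<Rightarrow> 'v clause multiset \<Rightarrow> bool" where
  "up_implies_all F \<Delta> \<longleftrightarrow> (\<forall>D\<in>#\<Delta>. up_implies F D)"

definition cost :: "'v set \<Rightarrow> 'v subst \<Rightarrow> nat" where
  "cost B \<alpha> = (\<Sum>b\<in>B. (if \<alpha> b = Const True then 1 else 0))"

definition cost_SR :: "'v set \<Rightarrow> 'v clause set \<Rightarrow> 'v clause \<Rightarrow> bool" where
  "cost_SR B \<Gamma> C \<longleftrightarrow>
     (\<exists>\<sigma>. up_implies_all (restrict_ms (neg_clause C) (mset_set \<Gamma>))
                         (restrict_ms \<sigma> (mset_set (\<Gamma> \<union> {C})))
        \<and> (\<forall>\<tau>. is_total \<tau> \<and> extends \<tau> (neg_clause C) \<longrightarrow>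
               cost B (subst_comp \<tau> \<sigma>) \<le> cost B \<tau>))"

definition perm_subst :: "('v \<Rightarrow> 'v) \<Rightarrow> 'v subst" where
  "perm_subst p = (\<lambda>x. Lit (Pos (p x)))"

end

theory Submission
  imports Defs
begin

lemma restrict_self_empty:
  assumes "restrict_clause \<sigma> E = Some D"
  shows "restrict_clause (neg_clause D) D = Some {}"
proof -
  have nt: "\<forall>l\<in>D. neg_lit l \<notin> D" and DL: "D = {l. Lit l \<in> subst_lit \<sigma> ` E}"
    using assms unfolding restrict_clause_def Let_def by (auto split: if_splits)
  have "\<forall>l\<in>D. subst_lit (neg_clause D) l = Const False"
  proof
    fix l assume "l \<in> D"
    then show "subst_lit (neg_clause D) l = Const False"
      using nt by (cases l) (auto simp: neg_clause_def)
  qed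
  then have "subst_lit (neg_clause D) ` D \<subseteq> {Const False}" by auto
  then show ?thesis unfolding restrict_clause_def Let_def by auto
qed

lemma comp_eq:
  assumes "is_total \<tau>" "extends \<tau> (neg_clause C)"
  shows "subst_comp \<tau> (subst_comp (neg_clause C) (perm_subst p)) x = \<tau> (p x)"
proof -
  have "\<forall>x b. neg_clause C x = Const b \<longrightarrow> \<tau> x = Const b" using assms(2) unfolding extends_def .
  then show ?thesis unfolding subst_comp_def perm_subst_def
    by (cases "neg_clause C (p x)") (auto simp: neg_clause_def split: if_splits)
qed

theorem lemma6p5:
  fixes B :: "'v set" and \<Gamma> :: "'v clause set" and C :: "'v clause" and p :: "'v \<Rightarrow> 'v"
  assumes "finite B" and "finite \<Gamma>" and "\<forall>D\<in>\<Gamma>. finite D" and "finite C"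
    and "bij p"
    and "p ` B = B"
    and "satisfies (subst_comp (neg_clause C) (perm_subst p)) C"
    and "restrict_ms (subst_comp (neg_clause C) (perm_subst p)) (mset_set \<Gamma>)
           \<subseteq># restrict_ms (neg_clause C) (mset_set \<Gamma>)"
  shows "cost_SR B \<Gamma> C"
  unfolding cost_SR_def
proof (intro exI[of _ "subst_comp (neg_clause C) (perm_subst p)"] conjI allI impI)
  let ?s = "subst_comp (neg_clause C) (perm_subst p)"
  show "up_implies_all (restrict_ms (neg_clause C) (mset_set \<Gamma>))
                         (restrict_ms ?s (mset_set (\<Gamma> \<union> {C})))"
    unfolding up_implies_all_def
  proof
    fix D assume "D \<in># restrict_ms ?s (mset_set (\<Gamma> \<union> {C}))"
    then obtain E where E: "E \<in> \<Gamma> \<union> {C}" "restrict_clause ?s E \<noteq> None"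
      "D = the (restrict_clause ?s E)"
      using assms(2) unfolding restrict_ms_def by auto
    have "E \<noteq> C" using E(2) assms(7) unfolding satisfies_def by auto
    with E have EG: "E \<in> \<Gamma>" by auto
    have ES: "restrict_clause ?s E = Some D" using E by auto
    have "D \<in># restrict_ms ?s (mset_set \<Gamma>)"
      using EG ES assms(2) unfolding restrict_ms_def by force
    then have Din: "D \<in># restrict_ms (neg_clause C) (mset_set \<Gamma>)"
      using assms(8) by (meson mset_subset_eqD)
    have "{} \<in># restrict_ms (neg_clause D) (restrict_ms (neg_clause C) (mset_set \<Gamma>))"
      using Din restrict_self_empty[OF ES] unfolding restrict_ms_def[of "neg_clause D"]
      by force
    then show "up_implies (restrict_ms (neg_clause C) (mset_set \<Gamma>)) D"
      unfolding up_implies_def by (rule up_refutes.empty)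
  qed
next
    let ?s = "subst_comp (neg_clause C) (perm_subst p)"
    fix \<tau> :: "'v subst"
    assume a: "is_total \<tau> \<and> extends \<tau> (neg_clause C)"
    have "cost B (subst_comp \<tau> ?s) = (\<Sum>b\<in>B. (if \<tau> (p b) = Const True then 1 else 0))"
      unfolding cost_def using comp_eq[of \<tau> C p] a by simp
    also have "\<dots> = (\<Sum>b\<in>p ` B. (if \<tau> b = Const True then 1 else 0))"
    proof -
      have "inj_on p B" using assms(5) by (meson bij_def inj_on_subset subset_UNIV)
      then show ?thesis by (simp add: sum.reindex)
    qed
    also have "\<dots> = cost B \<tau>" using assms(6) unfolding cost_def by simp
    finally show "cost B (subst_comp \<tau> ?s) \<le> cost B \<tau>" by simp
qed

end
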